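(* Assume each $J_j'$ is a bijection of $\mathbb{R}$, and write $(\nabla J)^{-1}(\alpha):=((J_j')^{-1}(\alpha_j))_{j}$. Define, for $z=(q,\tilde\theta)\in\mathbb{R}^n\times\mathbb{R}^{|\mathcal E|}$ and $\sigma=(\alpha,\lambda,\eta,\nu)\in\mathbb{R}^n\times\mathbb{R}\times\mathbb{R}^{2|\mathcal E|}\times\mathbb{R}^n$, \[ \hat L(z,\sigma)=\sum_{j=1}^n J_j\big((\nabla J)^{-1}(\alpha)_j\big)+\alpha^T\big(q-(\nabla J)^{-1}(\alpha)\big)-\tfrac12\nu^TD\nu+\nu^T(q-d-CB\tilde\theta)-\lambda\mathbf 1^T(q-d)+\eta^T\big(H^T(q-d)-F\big), \] and the closed-loop system \[ T^z\dot z=-\nabla_z\hat L(z,\sigma),\qquad T^\sigma\dot\sigma=\big[\nabla_\sigma\hat L(z,\sigma)\big]^+_\eta, \] where $T^z,T^\sigma$ are diagonal with positive diagonal entries and the projection acts only on the $\eta$-components. Let $(z^*,\sigma^* )$, with $\eta^*\ge0$, be an equilibrium of this system. If a trajectory $(z(t),\sigma(t))$ of the system with $\eta(0)\ge0$ satisfies $\hat L(z^*,\sigma(t))\equiv\hat L(z^*,\sigma^* )$ and $\hat L(z(t),\sigma^* )\equiv\hat L(z^*,\sigma^* )$ for all $t\ge0$, then $\dot z\equiv0$ and $\dot\sigma\equiv0$.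
   Context: $(\mathcal N,\mathcal E)$ is a connected directed graph with $\mathcal N=\{1,\dots,n\}$; $C$ is its incidence matrix ($C_{j,e}=1$ if $e=(j,k)$, $-1$ if $e=(k,j)$, $0$ otherwise). $B$ and $D$ are diagonal with positive diagonal entries. $L:=CBC^T$, $H\in\mathbb{R}^{n\times 2|\mathcal E|}$ with $H^T=\begin{bmatrix} BC^TL^\dagger\\ -BC^TL^\dagger\end{bmatrix}$ ($L^\dagger$ Moore–Penrose inverse), $F=\begin{bmatrix}\overline F\\-\underline F\end{bmatrix}\in\mathbb{R}^{2|\mathcal E|}$, $d\in\mathbb{R}^n$. Each $J_j:\mathbb{R}\to\mathbb{R}$ is strictly convex and twice differentiable. Projection: for vectors $y,u$ of equal length, $([y]^+_u)_j=y_j$ if $y_j>0$ or $u_j>0$, and $0$ otherwise; here applied to the $\eta$-block of the gradient with $u=\eta$. (This system models generators' price-bidding dynamics, market dispatch/pricing dynamics, and linearized swing dynamics with $\omega\equiv\nu$.) *)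

theory Defs
  imports "HOL-Analysis.Analysis"
begin

definition strictly_convex_on :: "real set \<Rightarrow> (real \<Rightarrow> real) \<Rightarrow> bool" where
  "strictly_convex_on S f \<longleftrightarrow>
     (\<forall>x\<in>S. \<forall>y\<in>S. x \<noteq> y \<longrightarrow> (\<forall>u::real. 0 < u \<and> u < 1 \<longrightarrow>
        f ((1 - u) * x + u * y) < (1 - u) * f x + u * f y))"

definition diagm :: "real^'k \<Rightarrow> real^'k^'k" where
  "diagm v = (\<chi> i j. if i = j then v $ i else 0)"

definition pinv :: "real^'k^'k \<Rightarrow> real^'k^'k" where
  "pinv A = (THE X. A ** X ** A = A \<and> X ** A ** X = X \<and>
                    transpose (A ** X) = A ** X \<and> transpose (X ** A) = X ** A)"

definition connected_digraph :: "('e \<Rightarrow> 'n) \<Rightarrow> ('e \<Rightarrow> 'n) \<Rightarrow> bool" where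
  "connected_digraph src tgt \<longleftrightarrow>
     (\<forall>e. src e \<noteq> tgt e) \<and> inj (\<lambda>e. (src e, tgt e)) \<and>
     (\<forall>i j. (i, j) \<in> ({(src e, tgt e) | e. True} \<union> {(tgt e, src e) | e. True})\<^sup>*)"

definition incidence :: "('e::finite \<Rightarrow> 'n::finite) \<Rightarrow> ('e \<Rightarrow> 'n) \<Rightarrow> real^'e^'n" where
  "incidence src tgt = (\<chi> j e. if src e = j then 1 else if tgt e = j then -1 else 0)"

definition laplacian :: "real^'e^'n \<Rightarrow> real^'e \<Rightarrow> real^'n^'n" where
  "laplacian C b = C ** diagm b ** transpose C"

text \<open>The block B C^T L^dagger (so that H^T = [M; -M]).\<close>
definition Mblk :: "real^'e::finite^'n::finite \<Rightarrow> real^'e \<Rightarrow> real^'n^'e" where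
  "Mblk C b = diagm b ** transpose C ** pinv (laplacian C b)"

text \<open>H^T x, an element of R^(2|E|) represented as a pair.\<close>
definition HT :: "real^'e::finite^'n::finite \<Rightarrow> real^'e \<Rightarrow> real^'n \<Rightarrow> (real^'e) \<times> (real^'e)" where
  "HT C b x = (Mblk C b *v x, - (Mblk C b *v x))"

definition gradJinv :: "('n::finite \<Rightarrow> real \<Rightarrow> real) \<Rightarrow> real^'n \<Rightarrow> real^'n" where
  "gradJinv J \<alpha> = (\<chi> j. inv (deriv (J j)) (\<alpha> $ j))"

text \<open>The function hat L(z, sigma), z = (q, theta), sigma = (alpha, lambda, eta, nu),
  eta in R^(2|E|) as pair; F = (Fbar, - Funder).\<close>
definition Lhat ::
  "('n::finite \<Rightarrow> real \<Rightarrow> real) \<Rightarrow> real^'n \<Rightarrow> real^'e::finite^'n \<Rightarrow> real^'e \<Rightarrow> real^'n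
   \<Rightarrow> (real^'e) \<times> (real^'e)
   \<Rightarrow> (real^'n) \<times> (real^'e) \<Rightarrow> (real^'n) \<times> real \<times> ((real^'e) \<times> (real^'e)) \<times> (real^'n) \<Rightarrow> real" where
  "Lhat J Dd C b d F z \<sigma> =
     (case z of (q, \<theta>) \<Rightarrow> case \<sigma> of (\<alpha>, lam, \<eta>, \<nu>) \<Rightarrow>
       (\<Sum>j\<in>UNIV. J j (gradJinv J \<alpha> $ j))
       + \<alpha> \<bullet> (q - gradJinv J \<alpha>)
       - (1/2) * (\<nu> \<bullet> (diagm Dd *v \<nu>))
       + \<nu> \<bullet> (q - d - (C ** diagm b) *v \<theta>)
       - lam * (\<Sum>j\<in>UNIV. (q - d) $ j)
       + \<eta> \<bullet> (HT C b (q - d) - F))"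

definition grad :: "('a::real_inner \<Rightarrow> real) \<Rightarrow> 'a \<Rightarrow> 'a" where
  "grad f x = (THE g. GDERIV f x :> g)"

definition projp :: "real^'k \<Rightarrow> real^'k \<Rightarrow> real^'k" where
  "projp y u = (\<chi> j. if y $ j > 0 \<or> u $ j > 0 then y $ j else 0)"

definition proj_eta ::
  "(real^'n) \<times> real \<times> ((real^'e) \<times> (real^'e)) \<times> (real^'n)
   \<Rightarrow> (real^'e) \<times> (real^'e) \<Rightarrow> (real^'n) \<times> real \<times> ((real^'e) \<times> (real^'e)) \<times> (real^'n)" where
  "proj_eta g \<eta> = (case g of (g\<alpha>, glam, (ga, gb), g\<nu>) \<Rightarrow>
      (g\<alpha>, glam, (projp ga (fst \<eta>), projp gb (snd \<eta>)), g\<nu>))"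

definition eta_of :: "(real^'n) \<times> real \<times> ((real^'e) \<times> (real^'e)) \<times> (real^'n) \<Rightarrow> (real^'e) \<times> (real^'e)" where
  "eta_of \<sigma> = fst (snd (snd \<sigma>))"

definition eta_nonneg :: "(real^'e) \<times> (real^'e) \<Rightarrow> bool" where
  "eta_nonneg \<eta> \<longleftrightarrow> (\<forall>i. fst \<eta> $ i \<ge> 0 \<and> snd \<eta> $ i \<ge> 0)"

text \<open>Diagonal positive time-constant matrices, acting on z- and sigma-vectors.
  T^z is given by its diagonal (tq, ttheta); T^sigma by (talpha, tlambda, teta, tnu).\<close>
definition Tz :: "(real^'n) \<times> (real^'e) \<Rightarrow> (real^'n) \<times> (real^'e) \<Rightarrow> (real^'n) \<times> (real^'e)" where
  "Tz t v = (fst t * fst v, snd t * snd v)"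

definition Tsig ::
  "(real^'n) \<times> real \<times> ((real^'e) \<times> (real^'e)) \<times> (real^'n)
   \<Rightarrow> (real^'n) \<times> real \<times> ((real^'e) \<times> (real^'e)) \<times> (real^'n)
   \<Rightarrow> (real^'n) \<times> real \<times> ((real^'e) \<times> (real^'e)) \<times> (real^'n)" where
  "Tsig t v = (case t of (t1, t2, (t3, t4), t5) \<Rightarrow> case v of (v1, v2, (v3, v4), v5) \<Rightarrow>
      (t1 * v1, t2 * v2, (t3 * v3, t4 * v4), t5 * v5))"

definition Tz_pos :: "(real^'n) \<times> (real^'e) \<Rightarrow> bool" where
  "Tz_pos t \<longleftrightarrow> (\<forall>i. fst t $ i > 0) \<and> (\<forall>i. snd t $ i > 0)"

definition Tsig_pos :: "(real^'n) \<times> real \<times> ((real^'e) \<times> (real^'e)) \<times> (real^'n) \<Rightarrow> bool" where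
  "Tsig_pos t \<longleftrightarrow> (case t of (t1, t2, (t3, t4), t5) \<Rightarrow>
      (\<forall>i. t1 $ i > 0) \<and> t2 > 0 \<and> (\<forall>i. t3 $ i > 0) \<and> (\<forall>i. t4 $ i > 0) \<and> (\<forall>i. t5 $ i > 0))"

end

theory Submission
  imports Defs
begin


lemma sc_convex:
  assumes "strictly_convex_on UNIV (f::real\<Rightarrow>real)"
  shows "convex_on UNIV f"
proof (rule convex_onI)
  fix t x y :: real assume t: "0 < t" "t < 1"
  show "f ((1 - t) *\<^sub>R x + t *\<^sub>R y) \<le> (1 - t) * f x + t * f y"
  proof (cases "x = y")
    case True then show ?thesis by (simp add: algebra_simps)
  next
    case False then show ?thesis using assms t unfolding strictly_convex_on_def
      by (simp add: less_imp_le)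
  qed
qed simp

lemma tangent_le:
  assumes "strictly_convex_on UNIV (f::real\<Rightarrow>real)" "\<forall>x. f differentiable (at x)"
  shows "f y - f x \<ge> deriv f x * (y - x)"
  apply (rule convex_on_imp_above_tangent[OF sc_convex[OF assms(1)]])
  using assms(2) by (auto simp: DERIV_deriv_iff_real_differentiable)

lemma tangent_lt:
  assumes "strictly_convex_on UNIV (f::real\<Rightarrow>real)" "\<forall>x. f differentiable (at x)" "x \<noteq> y"
  shows "f y - f x > deriv f x * (y - x)"
proof -
  let ?m = "(x + y) / 2"
  have "\<forall>u. 0 < u \<and> u < 1 \<longrightarrow> f ((1 - u) * x + u * y) < (1 - u) * f x + u * f y"
    using assms(1,3) unfolding strictly_convex_on_def by blast
  from spec[OF this, of "1/2"] have "f ((1 - 1/2) * x + (1/2) * y) < (1 - 1/2) * f x + (1/2) * f y" by simp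
  hence m: "f ?m < (f x + f y) / 2" by (simp add: field_simps)
  have "f ?m - f x \<ge> deriv f x * (?m - x)" by (rule tangent_le[OF assms(1,2)])
  with m show ?thesis by (simp add: field_simps)
qed

lemma deriv_strict_mono:
  assumes "strictly_convex_on UNIV (f::real\<Rightarrow>real)" "\<forall>x. f differentiable (at x)" "x < y"
  shows "deriv f x < deriv f y"
proof -
  have 1: "f y - f x > deriv f x * (y - x)" using tangent_lt[OF assms(1,2)] assms(3) by auto
  have 2: "f x - f y > deriv f y * (x - y)" using tangent_lt[OF assms(1,2)] assms(3) by auto
  from 1 2 have "deriv f x * (y - x) < deriv f y * (y - x)" by (simp add: algebra_simps)
  thus ?thesis using assms(3) by (simp add: mult_less_cancel_right)
qed

lemma inv_cont:
  assumes "\<forall>x. deriv (f::real\<Rightarrow>real) differentiable (at x)" "bij (deriv f)"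
  shows "isCont (inv (deriv f)) a"
proof -
  have "isCont (inv (deriv f)) (deriv f (inv (deriv f) a))"
    apply (rule isCont_inverse_function[where d=1 and f="deriv f" and g="inv (deriv f)" and x="inv (deriv f) a"])
    using assms by (auto simp: bij_def differentiable_imp_continuous_within)
  thus ?thesis using assms(2) by (simp add: bij_def surj_f_inv_f)
qed

lemma conj_deriv:
  assumes "strictly_convex_on UNIV (f::real\<Rightarrow>real)" "\<forall>x. f differentiable (at x)"
    "\<forall>x. deriv f differentiable (at x)" "bij (deriv f)"
  shows "((\<lambda>a. f (inv (deriv f) a) - a * inv (deriv f) a) has_real_derivative - inv (deriv f) a) (at a)"
proof -
  let ?g = "inv (deriv f)"
  let ?h = "\<lambda>a. f (?g a) - a * ?g a"
  have dg: "deriv f (?g y) = y" for y using assms(4) by (simp add: bij_def surj_f_inv_f)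
  have lo: "?h y - ?h a \<ge> - (y - a) * ?g y" for y
    using tangent_le[OF assms(1,2), where y="?g y" and x="?g a"] dg[of a] by (simp add: algebra_simps)
  have up: "?h y - ?h a \<le> - (y - a) * ?g a" for y
    using tangent_le[OF assms(1,2), where y="?g a" and x="?g y"] dg[of y] by (simp add: algebra_simps)
  have bnd: "min (- ?g y) (- ?g a) \<le> (?h y - ?h a) / (y - a) \<and> (?h y - ?h a) / (y - a) \<le> max (- ?g y) (- ?g a)"
    if "y \<noteq> a" for y
  proof (cases "y > a")
    case True
    have "- ?g y \<le> (?h y - ?h a) / (y - a)" using lo[of y] True
      by (simp add: pos_le_divide_eq algebra_simps)
    moreover have "(?h y - ?h a) / (y - a) \<le> - ?g a" using up[of y] True
      by (simp add: pos_divide_le_eq algebra_simps)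
    ultimately show ?thesis by linarith
  next
    case False
    then have ya: "y < a" using that by auto
    have "- ?g y \<ge> (?h y - ?h a) / (y - a)" using lo[of y] ya
      by (simp add: neg_divide_le_eq algebra_simps)
    moreover have "(?h y - ?h a) / (y - a) \<ge> - ?g a" using up[of y] ya
      by (simp add: neg_le_divide_eq algebra_simps)
    ultimately show ?thesis by linarith
  qed
  have c: "(?g \<longlongrightarrow> ?g a) (at a)" using inv_cont[OF assms(3,4)] by (simp add: isCont_def)
  have l1: "((\<lambda>y. min (- ?g y) (- ?g a)) \<longlongrightarrow> - ?g a) (at a)"
    using tendsto_min[OF tendsto_minus[OF c] tendsto_const[of "- ?g a"]] by simp
  have l2: "((\<lambda>y. max (- ?g y) (- ?g a)) \<longlongrightarrow> - ?g a) (at a)"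
    using tendsto_max[OF tendsto_minus[OF c] tendsto_const[of "- ?g a"]] by simp
  have ev: "eventually (\<lambda>y. y \<noteq> a) (at a)" by (simp add: eventually_at_filter)
  have "((\<lambda>y. (?h y - ?h a) / (y - a)) \<longlongrightarrow> - ?g a) (at a)"
    apply (rule tendsto_sandwich[OF _ _ l1 l2])
    using ev bnd by (auto elim!: eventually_mono)
  thus ?thesis by (simp add: has_field_derivative_iff)
qed



lemma grad_eq: assumes "GDERIV f x :> g" shows "grad f x = g"
proof -
  have u: "g1 = g2" if "GDERIV f x :> g1" "GDERIV f x :> g2" for g1 g2
  proof -
    have "(\<lambda>h. h \<bullet> g1) = (\<lambda>h. h \<bullet> g2)"
      using has_derivative_unique that unfolding gderiv_def by blast
    hence "(g1 - g2) \<bullet> g1 = (g1 - g2) \<bullet> g2" by metis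
    hence "(g1 - g2) \<bullet> (g1 - g2) = 0" by (simp add: inner_diff_right)
    thus ?thesis by simp
  qed
  show ?thesis unfolding grad_def using assms u by (metis (mono_tags) the_equality)
qed

lemma gderiv_sep:
  fixes x :: "real^'k::finite"
  assumes "\<And>j. DERIV (\<phi> j) (x$j) :> D j"
  shows "GDERIV (\<lambda>x. \<Sum>j\<in>UNIV. \<phi> j (x$j)) x :> (\<chi> j. D j)"
proof -
  have "((\<lambda>x. \<Sum>j\<in>UNIV. \<phi> j (x$j)) has_derivative (\<lambda>h. \<Sum>j\<in>UNIV. D j * h$j)) (at x)"
  proof (rule has_derivative_sum)
    fix j
    have "((\<lambda>x. x$j) has_derivative (\<lambda>h. h$j)) (at x)"
      by (rule bounded_linear_imp_has_derivative) (rule bounded_linear_vec_nth)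
    moreover have "(\<phi> j has_derivative (*) (D j)) (at (x$j))"
      using assms[of j] by (simp add: has_field_derivative_def)
    ultimately show "((\<lambda>x. \<phi> j (x$j)) has_derivative (\<lambda>h. D j * h$j)) (at x)"
      using has_derivative_compose[of "\<lambda>x. x$j"] by blast
  qed
  thus ?thesis unfolding gderiv_def by (simp add: inner_vec_def mult.commute)
qed

lemma gderiv_lin: "GDERIV (\<lambda>x. k + x \<bullet> w) x :> w"
  unfolding gderiv_def
  by (auto intro!: derivative_eq_intros)

lemma gderiv_prod4:
  assumes "GDERIV F1 a :> G1" "GDERIV F2 l :> G2" "GDERIV F3 e :> G3" "GDERIV F4 v :> G4"
  shows "GDERIV (\<lambda>y. F1 (fst y) + F2 (fst (snd y)) + F3 (fst (snd (snd y))) + F4 (snd (snd (snd y)))) (a,l,e,v) :> (G1,G2,G3,G4)"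
proof -
  let ?x = "(a,l,e,v)"
  have p1: "(fst has_derivative fst) (at ?x)" by (rule has_derivative_fst[OF has_derivative_ident])
  have p2: "((\<lambda>y. fst (snd y)) has_derivative (\<lambda>y. fst (snd y))) (at ?x)"
    by (rule has_derivative_fst[OF has_derivative_snd[OF has_derivative_ident]])
  have p3: "((\<lambda>y. fst (snd (snd y))) has_derivative (\<lambda>y. fst (snd (snd y)))) (at ?x)"
    by (rule has_derivative_fst[OF has_derivative_snd[OF has_derivative_snd[OF has_derivative_ident]]])
  have p4: "((\<lambda>y. snd (snd (snd y))) has_derivative (\<lambda>y. snd (snd (snd y)))) (at ?x)"
    by (rule has_derivative_snd[OF has_derivative_snd[OF has_derivative_snd[OF has_derivative_ident]]])
  have d1: "((\<lambda>y. F1 (fst y)) has_derivative (\<lambda>h. fst h \<bullet> G1)) (at ?x)"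
    using has_derivative_compose[OF p1, of F1] assms(1) unfolding gderiv_def by simp
  have d2: "((\<lambda>y. F2 (fst (snd y))) has_derivative (\<lambda>h. fst (snd h) \<bullet> G2)) (at ?x)"
    using has_derivative_compose[OF p2, of F2] assms(2) unfolding gderiv_def by simp
  have d3: "((\<lambda>y. F3 (fst (snd (snd y)))) has_derivative (\<lambda>h. fst (snd (snd h)) \<bullet> G3)) (at ?x)"
    using has_derivative_compose[OF p3, of F3] assms(3) unfolding gderiv_def by simp
  have d4: "((\<lambda>y. F4 (snd (snd (snd y)))) has_derivative (\<lambda>h. snd (snd (snd h)) \<bullet> G4)) (at ?x)"
    using has_derivative_compose[OF p4, of F4] assms(4) unfolding gderiv_def by simp
  have "((\<lambda>y. F1 (fst y) + F2 (fst (snd y)) + F3 (fst (snd (snd y))) + F4 (snd (snd (snd y)))) has_derivative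
     (\<lambda>h. fst h \<bullet> G1 + fst (snd h) \<bullet> G2 + fst (snd (snd h)) \<bullet> G3 + snd (snd (snd h)) \<bullet> G4)) (at ?x)"
    by (intro has_derivative_add d1 d2 d3 d4)
  moreover have "(\<lambda>h. fst h \<bullet> G1 + fst (snd h) \<bullet> G2 + fst (snd (snd h)) \<bullet> G3 + snd (snd (snd h)) \<bullet> G4)
     = (\<lambda>h. h \<bullet> (G1,G2,G3,G4))"
    by (auto simp: fun_eq_iff inner_prod_def)
  ultimately show ?thesis unfolding gderiv_def by simp
qed

lemma diagm_mult: "diagm v *v x = (\<chi> i. v$i * x$i)"
proof -
  have "(\<Sum>j\<in>UNIV. (if i = j then v$i else 0) * x$j) = v$i * x$i" for i
  proof -
    have "(\<Sum>j\<in>UNIV. (if i = j then v$i else 0) * x$j) = (\<Sum>j\<in>UNIV. if j = i then v$i * x$i else 0)"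
      by (rule sum.cong) auto
    thus ?thesis by simp
  qed
  thus ?thesis by (simp add: vec_eq_iff matrix_vector_mult_def diagm_def)
qed



lemma Lhat_sig: "Lhat J Dd C b d F (q,\<theta>) y =
   (\<Sum>j\<in>UNIV. J j (inv (deriv (J j)) (fst y $ j)) - fst y $ j * inv (deriv (J j)) (fst y $ j) + fst y $ j * q$j)
 + (- fst (snd y) * (\<Sum>j\<in>UNIV. (q-d)$j))
 + (0 + fst (snd (snd y)) \<bullet> (HT C b (q-d) - F))
 + (\<Sum>j\<in>UNIV. -(1/2)*(Dd$j * (snd(snd(snd y))$j)^2) + snd(snd(snd y))$j * (q - d - (C**diagm b) *v \<theta>)$j)"
proof -
  obtain \<alpha> lam \<eta> \<nu> where y: "y = (\<alpha>, lam, \<eta>, \<nu>)" by (cases y) auto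
  show ?thesis unfolding y
    by (simp add: Lhat_def gradJinv_def diagm_mult inner_vec_def sum.distrib sum_subtractf
        sum_distrib_left sum_negf algebra_simps power2_eq_square)
qed

lemma vm_diff: "((x::real^'m) - y) v* (A::real^'k^'m) = x v* A - y v* A"
  by (simp add: vec_eq_iff vector_matrix_mult_def sum_subtractf algebra_simps)

lemma Lhat_z: "Lhat J Dd C b d F (q,\<theta>) (\<alpha>,lam,\<eta>,\<nu>) = Lhat J Dd C b d F (0,0) (\<alpha>,lam,\<eta>,\<nu>) +
   (q,\<theta>) \<bullet> (\<alpha> + \<nu> - (\<chi> j. lam) + ((fst \<eta> - snd \<eta>) v* Mblk C b), -(\<nu> v* (C ** diagm b)))"
proof -
  obtain \<eta>1 \<eta>2 where e: "\<eta> = (\<eta>1, \<eta>2)" by (cases \<eta>) auto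
  obtain F1 F2 where f: "F = (F1, F2)" by (cases F) auto
  have s: "lam * (\<Sum>j\<in>UNIV. q$j) = q \<bullet> (\<chi> j. lam)" by (simp add: inner_vec_def sum_distrib_left mult.commute)
  show ?thesis unfolding e f
    by (simp add: Lhat_def HT_def matrix_vector_mult_diff_distrib inner_diff_left inner_diff_right
       inner_add_left inner_add_right dot_lmul_matrix[symmetric] vm_diff sum_subtractf s algebra_simps inner_commute)
qed



lemma grad_sig:
  assumes conj: "\<forall>j a. ((\<lambda>a. J j (inv (deriv (J j)) a) - a * inv (deriv (J j)) a) has_real_derivative - inv (deriv (J j)) a) (at a)"
  shows "grad (\<lambda>y. Lhat J Dd C b d F (q,\<theta>) y) (\<alpha>,lam,\<eta>,\<nu>) =
    (q - gradJinv J \<alpha>, - (\<Sum>j\<in>UNIV. (q-d)$j), HT C b (q-d) - F,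
     q - d - (C**diagm b)*v \<theta> - (\<chi> j. Dd$j * \<nu>$j))"
proof (rule grad_eq)
  let ?c = "q - d - (C**diagm b) *v \<theta>"
  have e: "(\<lambda>y. Lhat J Dd C b d F (q,\<theta>) y) = (\<lambda>y.
   (\<lambda>a. \<Sum>j\<in>UNIV. J j (inv (deriv (J j)) (a $ j)) - a $ j * inv (deriv (J j)) (a $ j) + a $ j * q$j) (fst y)
 + (\<lambda>l. - l * (\<Sum>j\<in>UNIV. (q-d)$j)) (fst (snd y))
 + (\<lambda>e. 0 + e \<bullet> (HT C b (q-d) - F)) (fst (snd (snd y)))
 + (\<lambda>v. \<Sum>j\<in>UNIV. -(1/2)*(Dd$j * (v$j)^2) + v$j * ?c$j) (snd(snd(snd y))))"
    by (rule ext) (simp only: Lhat_sig)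
  have g1: "GDERIV (\<lambda>a. \<Sum>j\<in>UNIV. J j (inv (deriv (J j)) (a $ j)) - a $ j * inv (deriv (J j)) (a $ j) + a $ j * q$j) \<alpha>
     :> (\<chi> j. - inv (deriv (J j)) (\<alpha>$j) + q$j)"
  proof (rule gderiv_sep)
    fix j
    show "((\<lambda>a. J j (inv (deriv (J j)) a) - a * inv (deriv (J j)) a + a * q $ j) has_real_derivative
        - inv (deriv (J j)) (\<alpha> $ j) + q $ j) (at (\<alpha> $ j))"
    proof (rule DERIV_add)
      show "((\<lambda>a. J j (inv (deriv (J j)) a) - a * inv (deriv (J j)) a) has_real_derivative - inv (deriv (J j)) (\<alpha> $ j)) (at (\<alpha> $ j))"
        using conj by blast
      show "((\<lambda>a. a * q $ j) has_real_derivative q $ j) (at (\<alpha> $ j))"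
        by (auto intro!: derivative_eq_intros)
    qed
  qed
  have g2: "GDERIV (\<lambda>l. - l * (\<Sum>j\<in>UNIV. (q-d)$j)) lam :> - (\<Sum>j\<in>UNIV. (q-d)$j)"
    by (simp, auto intro!: derivative_eq_intros)
  have g4: "GDERIV (\<lambda>v. \<Sum>j\<in>UNIV. -(1/2)*(Dd$j * (v$j)^2) + v$j * ?c$j) \<nu> :> (\<chi> j. - (Dd$j * \<nu>$j) + ?c$j)"
  proof (rule gderiv_sep)
    fix j
    show "((\<lambda>v. -(1/2)*(Dd$j * v^2) + v * ?c$j) has_real_derivative - (Dd$j * \<nu>$j) + ?c$j) (at (\<nu> $ j))"
      by (auto intro!: derivative_eq_intros)
  qed
  have "GDERIV (\<lambda>y. Lhat J Dd C b d F (q,\<theta>) y) (\<alpha>,lam,\<eta>,\<nu>) :>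
     ((\<chi> j. - inv (deriv (J j)) (\<alpha>$j) + q$j), - (\<Sum>j\<in>UNIV. (q-d)$j), HT C b (q-d) - F, (\<chi> j. - (Dd$j * \<nu>$j) + ?c$j))"
    unfolding e by (rule gderiv_prod4[OF g1 g2 gderiv_lin g4])
  moreover have "(\<chi> j. - inv (deriv (J j)) (\<alpha>$j) + q$j) = q - gradJinv J \<alpha>"
    by (simp add: vec_eq_iff gradJinv_def)
  moreover have "(\<chi> j. - (Dd$j * \<nu>$j) + ?c$j) = ?c - (\<chi> j. Dd$j * \<nu>$j)"
    by (simp add: vec_eq_iff)
  ultimately show "GDERIV (\<lambda>y. Lhat J Dd C b d F (q,\<theta>) y) (\<alpha>,lam,\<eta>,\<nu>) :> (q - gradJinv J \<alpha>, - (\<Sum>j\<in>UNIV. (q-d)$j), HT C b (q-d) - F,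
     q - d - (C**diagm b)*v \<theta> - (\<chi> j. Dd$j * \<nu>$j))" by simp
qed

lemma grad_z:
  "grad (\<lambda>x. Lhat J Dd C b d F x (\<alpha>,lam,\<eta>,\<nu>)) z =
   (\<alpha> + \<nu> - (\<chi> j. lam) + ((fst \<eta> - snd \<eta>) v* Mblk C b), -(\<nu> v* (C ** diagm b)))"
proof (rule grad_eq)
  have "(\<lambda>x. Lhat J Dd C b d F x (\<alpha>,lam,\<eta>,\<nu>)) = (\<lambda>x. Lhat J Dd C b d F (0,0) (\<alpha>,lam,\<eta>,\<nu>) +
    x \<bullet> (\<alpha> + \<nu> - (\<chi> j. lam) + ((fst \<eta> - snd \<eta>) v* Mblk C b), -(\<nu> v* (C ** diagm b))))"
    by (rule ext, metis Lhat_z surj_pair)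
  thus "GDERIV (\<lambda>x. Lhat J Dd C b d F x (\<alpha>,lam,\<eta>,\<nu>)) z :>
   (\<alpha> + \<nu> - (\<chi> j. lam) + ((fst \<eta> - snd \<eta>) v* Mblk C b), -(\<nu> v* (C ** diagm b)))"
    using gderiv_lin by metis
qed



lemma deriv_const_zero:
  fixes f :: "real \<Rightarrow> 'a::real_normed_vector"
  assumes d: "(f has_vector_derivative f') (at t within {0..})" and t: "0 \<le> t"
    and c: "\<forall>u\<ge>0. f u = c"
  shows "f' = 0"
proof -
  have d1: "(f has_vector_derivative f') (at t within {t..})"
    using has_vector_derivative_within_subset[OF d] t by auto
  have d2: "((\<lambda>_. c) has_vector_derivative f') (at t within {t..})"
    by (rule has_vector_derivative_transform[OF _ _ d1]) (use c t in auto)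
  have d3: "((\<lambda>_. c) has_vector_derivative 0) (at t within {t..})" by simp
  have nb: "at t within {t..} \<noteq> bot" by (simp add: at_within_Ici_at_right)
  show ?thesis using vector_derivative_unique_within[OF nb d2 d3] .
qed

lemma nonneg_inv:
  fixes e e' :: "real \<Rightarrow> real"
  assumes d: "\<forall>t\<ge>0. (e has_real_derivative e' t) (at t within {0..})"
    and e0: "e 0 \<ge> 0" and pos: "\<forall>t\<ge>0. e t < 0 \<longrightarrow> e' t \<ge> 0"
  shows "\<forall>t\<ge>0. e t \<ge> 0"
proof (rule ccontr)
  assume "\<not> ?thesis"
  then obtain t1 where t1: "t1 \<ge> 0" "e t1 < 0" by force
  have cont: "continuous_on {0..} e"
    using d by (auto simp: continuous_on_eq_continuous_within has_real_derivative_iff_has_vector_derivative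
       intro: has_vector_derivative_continuous)
  let ?S = "{x \<in> {0..t1}. (\<lambda>_. 0) x \<le> e x}"
  have cl: "closed ?S"
    by (rule continuous_on_closed_Collect_le) (use cont in \<open>auto intro: continuous_on_subset\<close>)
  have ne: "?S \<noteq> {}" using e0 t1 by auto
  have bd: "bdd_above ?S" by (rule bdd_aboveI[of _ t1]) auto
  define t0 where "t0 = Sup ?S"
  have t0S: "t0 \<in> ?S" unfolding t0_def by (rule closed_contains_Sup[OF ne bd cl])
  hence t0: "0 \<le> t0" "t0 \<le> t1" "e t0 \<ge> 0" by auto
  have neg: "e x < 0" if "t0 < x" "x < t1" for x
  proof (rule ccontr)
    assume "\<not> e x < 0"
    hence "x \<in> ?S" using that t0 by auto
    hence "x \<le> t0" unfolding t0_def by (rule cSup_upper[OF _ bd])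
    thus False using that by auto
  qed
  have "e t0 \<le> e t1"
  proof (rule DERIV_nonneg_imp_increasing_open[OF t0(2)])
    fix x assume x: "t0 < x" "x < t1"
    have "x \<in> interior {0..}" using x t0 by (auto simp: interior_Ici[of "-1"])
    hence eq: "at x within {0..} = at x" by (rule at_within_interior)
    have "(e has_real_derivative e' x) (at x within {0..})" using d x t0 by auto
    hence "DERIV e x :> e' x" by (simp only: eq)
    moreover have "e' x \<ge> 0" using pos neg[OF x] x t0 by auto
    ultimately show "\<exists>y. DERIV e x :> y \<and> y \<ge> 0" by blast
  next
    show "continuous_on {t0..t1} e" using cont t0 by (auto intro: continuous_on_subset)
  qed
  thus False using t0 t1 by auto
qed



lemma phi_le:
  assumes "strictly_convex_on UNIV (f::real\<Rightarrow>real)" "\<forall>x. f differentiable (at x)" "bij (deriv f)"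
  shows "f (inv (deriv f) a) - a * inv (deriv f) a + a * inv (deriv f) c
       \<le> f (inv (deriv f) c) - c * inv (deriv f) c + c * inv (deriv f) c"
  using tangent_le[OF assms(1,2), where x="inv (deriv f) a" and y="inv (deriv f) c"] assms(3)
  by (simp add: bij_def surj_f_inv_f algebra_simps)

lemma phi_eq:
  assumes "strictly_convex_on UNIV (f::real\<Rightarrow>real)" "\<forall>x. f differentiable (at x)" "bij (deriv f)"
    and "f (inv (deriv f) a) - a * inv (deriv f) a + a * inv (deriv f) c
       = f (inv (deriv f) c) - c * inv (deriv f) c + c * inv (deriv f) c"
  shows "a = c"
proof (rule ccontr)
  assume ac: "a \<noteq> c"
  have dg: "deriv f (inv (deriv f) y) = y" for y using assms(3) by (simp add: bij_def surj_f_inv_f)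
  have "inv (deriv f) a \<noteq> inv (deriv f) c" using ac dg by metis
  from tangent_lt[OF assms(1,2) this] dg[of a] assms(4) show False by (simp add: algebra_simps)
qed

lemma vmul_zero: "(\<forall>i. (T::real^'k) $ i > 0) \<Longrightarrow> T * v = 0 \<Longrightarrow> v = 0"
  by (simp add: vec_eq_iff) (metis less_irrefl)

lemma proj_eta_exp: "proj_eta (a, l, w, v) \<eta> = (a, l, (projp (fst w) (fst \<eta>), projp (snd w) (snd \<eta>)), v)"
  by (cases w) (simp add: proj_eta_def)

lemma Tsig_exp: "Tsig (T1,T2,(T3,T4),T5) v =
   (T1 * fst v, T2 * fst (snd v), (T3 * fst (fst (snd (snd v))), T4 * snd (fst (snd (snd v)))), T5 * snd (snd (snd v)))"
  by (cases v) (auto simp: Tsig_def split: prod.splits)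

lemma projp_nth: "projp y u $ i = (if y $ i > 0 \<or> u $ i > 0 then y $ i else 0)"
  by (simp add: projp_def)



theorem proposition2:
  fixes src tgt :: "'e::finite \<Rightarrow> 'n::finite"
    and b :: "real^'e" and Dd :: "real^'n" and d :: "real^'n"
    and Fbar Funder :: "real^'e"
    and J :: "'n \<Rightarrow> real \<Rightarrow> real"
    and tz :: "(real^'n) \<times> (real^'e)"
    and ts :: "(real^'n) \<times> real \<times> ((real^'e) \<times> (real^'e)) \<times> (real^'n)"
    and zs :: "(real^'n) \<times> (real^'e)"
    and ss :: "(real^'n) \<times> real \<times> ((real^'e) \<times> (real^'e)) \<times> (real^'n)"
    and z :: "real \<Rightarrow> (real^'n) \<times> (real^'e)"
    and s :: "real \<Rightarrow> (real^'n) \<times> real \<times> ((real^'e) \<times> (real^'e)) \<times> (real^'n)"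
    and z' :: "real \<Rightarrow> (real^'n) \<times> (real^'e)"
    and s' :: "real \<Rightarrow> (real^'n) \<times> real \<times> ((real^'e) \<times> (real^'e)) \<times> (real^'n)"
  defines "LL \<equiv> Lhat J Dd (incidence src tgt) b d (Fbar, - Funder)"
  assumes graph: "connected_digraph src tgt"
    and b_pos: "\<forall>e. b $ e > 0"
    and D_pos: "\<forall>j. Dd $ j > 0"
    and J_strict_convex: "\<forall>j. strictly_convex_on UNIV (J j)"
    and J_diff: "\<forall>j x. J j differentiable (at x)"
    and J_diff2: "\<forall>j x. deriv (J j) differentiable (at x)"
    and J_bij: "\<forall>j. bij (deriv (J j))"
    and Tz_pos: "Tz_pos tz"
    and Ts_pos: "Tsig_pos ts"
    and eq_eta: "eta_nonneg (eta_of ss)"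
    and eq_z: "0 = - grad (\<lambda>x. LL x ss) zs"
    and eq_s: "0 = proj_eta (grad (\<lambda>y. LL zs y) ss) (eta_of ss)"
    and traj_z: "\<forall>t\<ge>0. (z has_vector_derivative z' t) (at t within {0..})"
    and traj_s: "\<forall>t\<ge>0. (s has_vector_derivative s' t) (at t within {0..})"
    and ode_z: "\<forall>t\<ge>0. Tz tz (z' t) = - grad (\<lambda>x. LL x (s t)) (z t)"
    and ode_s: "\<forall>t\<ge>0. Tsig ts (s' t) = proj_eta (grad (\<lambda>y. LL (z t) y) (s t)) (eta_of (s t))"
    and init: "eta_nonneg (eta_of (s 0))"
    and const1: "\<forall>t\<ge>0. LL zs (s t) = LL zs ss"
    and const2: "\<forall>t\<ge>0. LL (z t) ss = LL zs ss"
  shows "\<forall>t\<ge>0. z' t = 0 \<and> s' t = 0"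
proof -
  define C where "C = incidence src tgt"
  define F where "F = ((Fbar, - Funder) :: (real^'e) \<times> (real^'e))"
  have LLe: "LL = Lhat J Dd C b d F" unfolding LL_def C_def F_def ..
  have conj: "\<forall>j a. ((\<lambda>a. J j (inv (deriv (J j)) a) - a * inv (deriv (J j)) a) has_real_derivative - inv (deriv (J j)) a) (at a)"
    using conj_deriv J_strict_convex J_diff J_diff2 J_bij by blast
  obtain \<alpha>s ls \<eta>s \<nu>s where ss: "ss = (\<alpha>s, ls, \<eta>s, \<nu>s)" by (cases ss) auto
  obtain qs \<theta>s where zs: "zs = (qs, \<theta>s)" by (cases zs) auto
  obtain T1 T2 T3 T4 T5 where ts: "ts = (T1, T2, (T3, T4), T5)" by (cases ts) auto
  have Tpos: "\<forall>i. T1$i > 0" "T2 > 0" "\<forall>i. T3$i > 0" "\<forall>i. T4$i > 0" "\<forall>i. T5$i > 0"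
    using Ts_pos unfolding ts Tsig_pos_def by auto
  define S where "S = (\<Sum>j\<in>UNIV. (qs - d)$j)"
  define w where "w = HT C b (qs - d) - F"
  define cs where "cs = qs - d - (C**diagm b)*v \<theta>s"
  have gss: "grad (\<lambda>y. LL zs y) ss = (qs - gradJinv J \<alpha>s, - S, w, cs - (\<chi> j. Dd$j * \<nu>s$j))"
    unfolding LLe zs ss S_def w_def cs_def by (rule grad_sig[OF conj])
  have eqs: "0 = (qs - gradJinv J \<alpha>s, - S, (projp (fst w) (fst \<eta>s), projp (snd w) (snd \<eta>s)), cs - (\<chi> j. Dd$j * \<nu>s$j))"
    using eq_s unfolding gss proj_eta_exp by (simp add: ss eta_of_def)
  have E1: "qs = gradJinv J \<alpha>s" and E2: "S = 0" and E3a: "projp (fst w) (fst \<eta>s) = 0"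
    and E3b: "projp (snd w) (snd \<eta>s) = 0" and E4: "cs = (\<chi> j. Dd$j * \<nu>s$j)"
    using eqs by (auto simp: zero_prod_def)
  have E5: "\<nu>s v* (C ** diagm b) = 0"
    using eq_z unfolding LLe ss grad_z by (simp add: zero_prod_def)
  have ens: "\<forall>i. fst \<eta>s $ i \<ge> 0 \<and> snd \<eta>s $ i \<ge> 0" using eq_eta unfolding ss by (simp add: eta_of_def eta_nonneg_def)
  have wa: "fst w $ i \<le> 0 \<and> fst \<eta>s $ i * fst w $ i = 0" for i
    using E3a ens unfolding vec_eq_iff projp_nth by (metis (no_types) mult_zero_left mult_zero_right zero_index less_le_not_le linorder_not_less order_less_le)
  have wb: "snd w $ i \<le> 0 \<and> snd \<eta>s $ i * snd w $ i = 0" for i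
    using E3b ens unfolding vec_eq_iff projp_nth by (metis (no_types) mult_zero_left mult_zero_right zero_index less_le_not_le linorder_not_less order_less_le)
  define \<alpha> where "\<alpha> t = fst (s t)" for t
  define l where "l t = fst (snd (s t))" for t
  define \<eta> where "\<eta> t = fst (snd (snd (s t)))" for t
  define \<nu> where "\<nu> t = snd (snd (snd (s t)))" for t
  define q where "q t = fst (z t)" for t
  define \<theta> where "\<theta> t = snd (z t)" for t
  have st: "s t = (\<alpha> t, l t, \<eta> t, \<nu> t)" for t by (simp add: \<alpha>_def l_def \<eta>_def \<nu>_def)
  have zt: "z t = (q t, \<theta> t)" for t by (simp add: q_def \<theta>_def)
  define wt where "wt t = HT C b (q t - d) - F" for t
  have gst: "grad (\<lambda>y. LL (z t) y) (s t) = (q t - gradJinv J (\<alpha> t), - (\<Sum>j\<in>UNIV. (q t - d)$j), wt t,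
     q t - d - (C**diagm b)*v \<theta> t - (\<chi> j. Dd$j * \<nu> t$j))" for t
    unfolding LLe zt st wt_def by (rule grad_sig[OF conj])
  have gzt: "grad (\<lambda>x. LL x (s t)) (z t) = (\<alpha> t + \<nu> t - (\<chi> j. l t) + ((fst (\<eta> t) - snd (\<eta> t)) v* Mblk C b), -(\<nu> t v* (C ** diagm b)))" for t
    unfolding LLe st by (rule grad_z)
  have O: "T1 * fst (s' t) = q t - gradJinv J (\<alpha> t) \<and> T2 * fst (snd (s' t)) = - (\<Sum>j\<in>UNIV. (q t - d)$j)
     \<and> T3 * fst (fst (snd (snd (s' t)))) = projp (fst (wt t)) (fst (\<eta> t))
     \<and> T4 * snd (fst (snd (snd (s' t)))) = projp (snd (wt t)) (snd (\<eta> t))" if "t \<ge> 0" for t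
    using ode_s that unfolding gst ts Tsig_exp proj_eta_exp by (simp add: st eta_of_def)
  have Oz: "snd tz * snd (z' t) = \<nu> t v* (C ** diagm b)" if "t \<ge> 0" for t
    using ode_z that unfolding gzt Tz_def by simp
  have bl1: "bounded_linear (\<lambda>v::(real^'n) \<times> real \<times> ((real^'e) \<times> (real^'e)) \<times> (real^'n). fst (fst (snd (snd v))) $ i)" for i
    by (intro bounded_linear_compose[OF bounded_linear_vec_nth] bounded_linear_compose[OF bounded_linear_fst]
        bounded_linear_compose[OF bounded_linear_snd] bounded_linear_snd)
  have bl2: "bounded_linear (\<lambda>v::(real^'n) \<times> real \<times> ((real^'e) \<times> (real^'e)) \<times> (real^'n). snd (fst (snd (snd v))) $ i)" for i
    by (intro bounded_linear_compose[OF bounded_linear_vec_nth] bounded_linear_compose[OF bounded_linear_snd]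
        bounded_linear_compose[OF bounded_linear_fst] bounded_linear_compose[OF bounded_linear_snd] bounded_linear_snd)
  have inv1: "\<forall>t\<ge>0. fst (\<eta> t) $ i \<ge> 0" for i
  proof (rule nonneg_inv)
    show "\<forall>t\<ge>0. ((\<lambda>t. fst (\<eta> t) $ i) has_real_derivative fst (fst (snd (snd (s' t)))) $ i) (at t within {0..})"
      using traj_s bounded_linear.has_vector_derivative[OF bl1] unfolding has_real_derivative_iff_has_vector_derivative \<eta>_def
      by blast
    show "fst (\<eta> 0) $ i \<ge> 0" using init by (simp add: eta_nonneg_def eta_of_def \<eta>_def)
    show "\<forall>t\<ge>0. fst (\<eta> t) $ i < 0 \<longrightarrow> fst (fst (snd (snd (s' t)))) $ i \<ge> 0"
    proof (intro allI impI)
      fix t :: real assume "t \<ge> 0" "fst (\<eta> t) $ i < 0"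
      hence "T3 $ i * fst (fst (snd (snd (s' t)))) $ i \<ge> 0"
        using O[of t] by (metis projp_nth vector_mult_component linorder_not_less order_less_le order_refl)
      thus "fst (fst (snd (snd (s' t)))) $ i \<ge> 0" using Tpos(3)[rule_format, of i] by (auto simp: zero_le_mult_iff)
    qed
  qed
  have inv2: "\<forall>t\<ge>0. snd (\<eta> t) $ i \<ge> 0" for i
  proof (rule nonneg_inv)
    show "\<forall>t\<ge>0. ((\<lambda>t. snd (\<eta> t) $ i) has_real_derivative snd (fst (snd (snd (s' t)))) $ i) (at t within {0..})"
      using traj_s bounded_linear.has_vector_derivative[OF bl2] unfolding has_real_derivative_iff_has_vector_derivative \<eta>_def
      by blast
    show "snd (\<eta> 0) $ i \<ge> 0" using init by (simp add: eta_nonneg_def eta_of_def \<eta>_def)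
    show "\<forall>t\<ge>0. snd (\<eta> t) $ i < 0 \<longrightarrow> snd (fst (snd (snd (s' t)))) $ i \<ge> 0"
    proof (intro allI impI)
      fix t :: real assume "t \<ge> 0" "snd (\<eta> t) $ i < 0"
      hence "T4 $ i * snd (fst (snd (snd (s' t)))) $ i \<ge> 0"
        using O[of t] by (metis projp_nth vector_mult_component linorder_not_less order_less_le order_refl)
      thus "snd (fst (snd (snd (s' t)))) $ i \<ge> 0" using Tpos(4)[rule_format, of i] by (auto simp: zero_le_mult_iff)
    qed
  qed
  define \<phi> where "\<phi> j x = J j (inv (deriv (J j)) x) - x * inv (deriv (J j)) x + x * qs$j" for j x
  define \<psi> where "\<psi> j v = -(1/2)*(Dd$j * v^2) + v * cs$j" for j v
  have Lexp: "LL zs y = (\<Sum>j\<in>UNIV. \<phi> j (fst y $ j)) + (- fst (snd y) * S) + (0 + fst (snd (snd y)) \<bullet> w)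
      + (\<Sum>j\<in>UNIV. \<psi> j (snd (snd (snd y)) $ j))" for y
    unfolding LLe zs \<phi>_def \<psi>_def S_def w_def cs_def by (rule Lhat_sig)
  have qsj: "qs $ j = inv (deriv (J j)) (\<alpha>s $ j)" for j using E1 by (simp add: gradJinv_def)
  have csj: "cs $ j = Dd$j * \<nu>s$j" for j using E4 by simp
  have phle: "\<phi> j x \<le> \<phi> j (\<alpha>s $ j)" for j x
    unfolding \<phi>_def qsj using phi_le J_strict_convex J_diff J_bij by blast
  have pheq: "x = \<alpha>s $ j" if "\<phi> j x = \<phi> j (\<alpha>s $ j)" for j x
    using that unfolding \<phi>_def qsj using phi_eq J_strict_convex J_diff J_bij by blast
  have psgap: "\<psi> j (\<nu>s$j) - \<psi> j v = Dd$j / 2 * (v - \<nu>s$j)^2" for j v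
    unfolding \<psi>_def csj by (simp add: power2_eq_square algebra_simps)
  have psle: "\<psi> j v \<le> \<psi> j (\<nu>s$j)" for j v
    using psgap[of j v] D_pos[rule_format, of j] by (metis diff_ge_0_iff_ge divide_nonneg_pos zero_le_power2 mult_nonneg_nonneg less_imp_le zero_less_numeral)
  have pseq: "v = \<nu>s$j" if "\<psi> j v = \<psi> j (\<nu>s$j)" for j v
    using psgap[of j v] that D_pos[rule_format, of j] by simp
  have inner_w: "e \<bullet> w = (\<Sum>i\<in>UNIV. fst e $ i * fst w $ i) + (\<Sum>i\<in>UNIV. snd e $ i * snd w $ i)" for e
    by (simp add: inner_prod_def inner_vec_def)
  have ewz: "\<eta>s \<bullet> w = 0"
  proof -
    have h1: "(\<lambda>i. fst \<eta>s $ i * fst w $ i) = (\<lambda>_. 0)" using wa by (simp add: fun_eq_iff)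
    have h2: "(\<lambda>i. snd \<eta>s $ i * snd w $ i) = (\<lambda>_. 0)" using wb by (simp add: fun_eq_iff)
    show ?thesis unfolding inner_w h1 h2 by simp
  qed
  have key: "\<alpha> t = \<alpha>s \<and> \<nu> t = \<nu>s \<and> (\<forall>i. fst (\<eta> t) $ i * fst w $ i = 0 \<and> snd (\<eta> t) $ i * snd w $ i = 0)"
    if t: "t \<ge> 0" for t
  proof -
    have tl1: "\<forall>i\<in>UNIV. fst (\<eta> t) $ i * fst w $ i \<le> 0"
      using inv1 wa t by (simp add: mult_nonneg_nonpos)
    have tl2: "\<forall>i\<in>UNIV. snd (\<eta> t) $ i * snd w $ i \<le> 0"
      using inv2 wb t by (simp add: mult_nonneg_nonpos)
    have s1: "(\<Sum>i\<in>UNIV. fst (\<eta> t) $ i * fst w $ i) \<le> 0" using tl1 by (simp add: sum_nonpos)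
    have s2: "(\<Sum>i\<in>UNIV. snd (\<eta> t) $ i * snd w $ i) \<le> 0" using tl2 by (simp add: sum_nonpos)
    have A: "(\<Sum>j\<in>UNIV. \<phi> j (\<alpha> t $ j)) \<le> (\<Sum>j\<in>UNIV. \<phi> j (\<alpha>s $ j))" by (rule sum_mono) (rule phle)
    have B: "(\<Sum>j\<in>UNIV. \<psi> j (\<nu> t $ j)) \<le> (\<Sum>j\<in>UNIV. \<psi> j (\<nu>s $ j))" by (rule sum_mono) (rule psle)
    have eq: "LL zs (s t) = LL zs ss" using const1 t by blast
    hence eq': "(\<Sum>j\<in>UNIV. \<phi> j (\<alpha> t $ j)) + (\<Sum>i\<in>UNIV. fst (\<eta> t) $ i * fst w $ i) + (\<Sum>i\<in>UNIV. snd (\<eta> t) $ i * snd w $ i)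
       + (\<Sum>j\<in>UNIV. \<psi> j (\<nu> t $ j)) = (\<Sum>j\<in>UNIV. \<phi> j (\<alpha>s $ j)) + (\<Sum>j\<in>UNIV. \<psi> j (\<nu>s $ j))"
      unfolding Lexp using ewz unfolding inner_w by (simp add: st ss E2)
    have Aeq: "(\<Sum>j\<in>UNIV. \<phi> j (\<alpha>s $ j) - \<phi> j (\<alpha> t $ j)) = 0"
      using A B s1 s2 eq' by (simp add: sum_subtractf)
    have Beq: "(\<Sum>j\<in>UNIV. \<psi> j (\<nu>s $ j) - \<psi> j (\<nu> t $ j)) = 0"
      using A B s1 s2 eq' by (simp add: sum_subtractf)
    have e1: "(\<Sum>i\<in>UNIV. fst (\<eta> t) $ i * fst w $ i) = 0" using A B s1 s2 eq' by linarith
    have e2: "(\<Sum>i\<in>UNIV. snd (\<eta> t) $ i * snd w $ i) = 0" using A B s1 s2 eq' by linarith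
    have "\<forall>j\<in>UNIV. \<phi> j (\<alpha>s $ j) - \<phi> j (\<alpha> t $ j) = 0"
      using Aeq sum_nonneg_eq_0_iff[of UNIV "\<lambda>j. \<phi> j (\<alpha>s $ j) - \<phi> j (\<alpha> t $ j)"] phle by auto
    hence a: "\<alpha> t = \<alpha>s" using pheq by (simp add: vec_eq_iff)
    have "\<forall>j\<in>UNIV. \<psi> j (\<nu>s $ j) - \<psi> j (\<nu> t $ j) = 0"
      using Beq sum_nonneg_eq_0_iff[of UNIV "\<lambda>j. \<psi> j (\<nu>s $ j) - \<psi> j (\<nu> t $ j)"] psle by auto
    hence n: "\<nu> t = \<nu>s" using pseq by (simp add: vec_eq_iff)
    have "\<forall>i\<in>UNIV. - (fst (\<eta> t) $ i * fst w $ i) = 0"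
      using e1 sum_nonneg_eq_0_iff[of UNIV "\<lambda>i. - (fst (\<eta> t) $ i * fst w $ i)"] tl1 by (simp add: sum_negf)
    moreover have "\<forall>i\<in>UNIV. - (snd (\<eta> t) $ i * snd w $ i) = 0"
      using e2 sum_nonneg_eq_0_iff[of UNIV "\<lambda>i. - (snd (\<eta> t) $ i * snd w $ i)"] tl2 by (simp add: sum_negf)
    ultimately show ?thesis using a n by simp
  qed
  have qconst: "q t = qs" if t: "t \<ge> 0" for t
  proof -
    have "((\<lambda>t. fst (s t)) has_vector_derivative fst (s' t)) (at t within {0..})"
      using bounded_linear.has_vector_derivative[OF bounded_linear_fst] traj_s t by blast
    hence "fst (s' t) = 0" using deriv_const_zero[of "\<lambda>t. fst (s t)"] key t unfolding \<alpha>_def by blast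
    thus ?thesis using O[OF t] key[OF t] E1 by simp
  qed
  show ?thesis
  proof (intro allI impI)
    fix t :: real assume t: "t \<ge> 0"
    have a0: "fst (s' t) = 0"
    proof -
      have "((\<lambda>t. fst (s t)) has_vector_derivative fst (s' t)) (at t within {0..})"
        using bounded_linear.has_vector_derivative[OF bounded_linear_fst] traj_s t by blast
      thus ?thesis using deriv_const_zero[of "\<lambda>t. fst (s t)"] key t unfolding \<alpha>_def by blast
    qed
    have bl3: "bounded_linear (\<lambda>v::(real^'n) \<times> real \<times> ((real^'e) \<times> (real^'e)) \<times> (real^'n). snd (snd (snd v)))"
      by (intro bounded_linear_compose[OF bounded_linear_snd] bounded_linear_snd)
    have n0: "snd (snd (snd (s' t))) = 0"
    proof -
      have "((\<lambda>t. snd (snd (snd (s t)))) has_vector_derivative snd (snd (snd (s' t)))) (at t within {0..})"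
        using bounded_linear.has_vector_derivative[OF bl3] traj_s t by blast
      thus ?thesis using deriv_const_zero[of "\<lambda>t. snd (snd (snd (s t)))"] key t unfolding \<nu>_def by blast
    qed
    have q0: "fst (z' t) = 0"
    proof -
      have "((\<lambda>t. fst (z t)) has_vector_derivative fst (z' t)) (at t within {0..})"
        using bounded_linear.has_vector_derivative[OF bounded_linear_fst] traj_z t by blast
      thus ?thesis using deriv_const_zero[of "\<lambda>t. fst (z t)"] qconst t unfolding q_def by blast
    qed
    have th0: "snd (z' t) = 0"
      using Oz[OF t] key[OF t] E5 Tz_pos vmul_zero[of "snd tz" "snd (z' t)"] by (simp add: Tz_pos_def)
    have l0: "fst (snd (s' t)) = 0" using O[OF t] qconst[OF t] E2 Tpos(2) unfolding S_def by simp
    have wq: "wt t = w" unfolding wt_def w_def qconst[OF t] ..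
    have p1: "projp (fst w) (fst (\<eta> t)) = 0"
    proof -
      have "projp (fst w) (fst (\<eta> t)) $ i = 0" for i
        using wa[of i] key[OF t] by (smt (verit) projp_nth mult_eq_0_iff)
      thus ?thesis by (simp add: vec_eq_iff)
    qed
    have p2: "projp (snd w) (snd (\<eta> t)) = 0"
    proof -
      have "projp (snd w) (snd (\<eta> t)) $ i = 0" for i
        using wb[of i] key[OF t] by (smt (verit) projp_nth mult_eq_0_iff)
      thus ?thesis by (simp add: vec_eq_iff)
    qed
    have e1: "fst (fst (snd (snd (s' t)))) = 0"
      using O[OF t] wq p1 Tpos(3) vmul_zero[of T3] by simp
    have e2: "snd (fst (snd (snd (s' t)))) = 0"
      using O[OF t] wq p2 Tpos(4) vmul_zero[of T4] by simp
    show "z' t = 0 \<and> s' t = 0"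
      using q0 th0 a0 l0 e1 e2 n0 by (simp add: prod_eq_iff)
  qed
qed

end
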